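(* Let $\mathbb{K}\in\{\mathbb{R},\mathbb{C}\}$ and $\mathcal{A}=(A_1,\ldots,A_d)$ positive semidefinite matrices in $\mathbb{K}^{n\times n}$ (symmetric/Hermitian) that pairwise commute. Then $\mathrm{Opt}(\mathcal{A})=\mathrm{OptSDP}(\mathcal{A})$.
   Context: $\langle x,y\rangle=x^\dagger y$ with $\dagger$ the (conjugate) transpose, $\langle A,X\rangle=\operatorname{Tr}(A^\dagger X)$. $\mathrm{Opt}(\mathcal{A})=\max_{x\in\mathbb{K}^n,\ \|x\|=1}\big(\prod_{i=1}^d\langle x,A_ix\rangle\big)^{1/d}$; $\mathrm{OptSDP}(\mathcal{A})=\max\big\{\big(\prod_{i=1}^d\langle A_i,X\rangle\big)^{1/d}: X\text{ symmetric/Hermitian},\ X\succeq0,\ \operatorname{Tr}X=1\big\}$. *)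

theory Defs
  imports "HOL-Analysis.Analysis"
begin

definition rinner :: "real^'n \<Rightarrow> real^'n \<Rightarrow> real" where
  "rinner x y = (\<Sum>i\<in>UNIV. x$i * y$i)"

definition rsym :: "real^'n^'n \<Rightarrow> bool" where
  "rsym A \<longleftrightarrow> transpose A = A"

definition rpsd :: "real^'n^'n \<Rightarrow> bool" where
  "rpsd A \<longleftrightarrow> rsym A \<and> (\<forall>x. rinner x (A *v x) \<ge> 0)"

definition rtrace :: "real^'n^'n \<Rightarrow> real" where
  "rtrace X = (\<Sum>i\<in>UNIV. X$i$i)"

definition rmat_inner :: "real^'n^'n \<Rightarrow> real^'n^'n \<Rightarrow> real" where
  "rmat_inner A X = rtrace (transpose A ** X)"

definition Opt_r :: "nat \<Rightarrow> (nat \<Rightarrow> real^'n^'n) \<Rightarrow> real" where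
  "Opt_r d A = Sup {root d (\<Prod>i<d. rinner x (A i *v x)) | x. norm x = 1}"

definition OptSDP_r :: "nat \<Rightarrow> (nat \<Rightarrow> real^'n^'n) \<Rightarrow> real" where
  "OptSDP_r d A = Sup {root d (\<Prod>i<d. rmat_inner (A i) X) | X.
      rsym X \<and> rpsd X \<and> rtrace X = 1}"

definition cinner_vec :: "complex^'n \<Rightarrow> complex^'n \<Rightarrow> complex" where
  "cinner_vec x y = (\<Sum>i\<in>UNIV. cnj (x$i) * y$i)"

definition cadj :: "complex^'n^'n \<Rightarrow> complex^'n^'n" where
  "cadj A = (\<chi> i j. cnj (A$j$i))"

definition cherm :: "complex^'n^'n \<Rightarrow> bool" where
  "cherm A \<longleftrightarrow> cadj A = A"

text \<open>For Hermitian A the value x^* A x is real; PSD means it is nonnegative.\<close>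
definition cpsd :: "complex^'n^'n \<Rightarrow> bool" where
  "cpsd A \<longleftrightarrow> cherm A \<and> (\<forall>x. Im (cinner_vec x (A *v x)) = 0 \<and> Re (cinner_vec x (A *v x)) \<ge> 0)"

definition ctrace :: "complex^'n^'n \<Rightarrow> complex" where
  "ctrace X = (\<Sum>i\<in>UNIV. X$i$i)"

definition cmat_inner :: "complex^'n^'n \<Rightarrow> complex^'n^'n \<Rightarrow> complex" where
  "cmat_inner A X = ctrace (cadj A ** X)"

text \<open>For Hermitian arguments the quantities below are real; we take real parts.\<close>
definition Opt_c :: "nat \<Rightarrow> (nat \<Rightarrow> complex^'n^'n) \<Rightarrow> real" where
  "Opt_c d A = Sup {root d (\<Prod>i<d. Re (cinner_vec x (A i *v x))) | x. norm x = 1}"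

definition OptSDP_c :: "nat \<Rightarrow> (nat \<Rightarrow> complex^'n^'n) \<Rightarrow> real" where
  "OptSDP_c d A = Sup {root d (\<Prod>i<d. Re (cmat_inner (A i) X)) | X.
      cherm X \<and> cpsd X \<and> ctrace X = 1}"

end

theory Submission
  imports Defs
begin


class rcl = real_normed_field + euclidean_space +
  fixes cj :: "'a \<Rightarrow> 'a"
  assumes cj_cj[simp]: "cj (cj a) = a"
    and cj_add[simp]: "cj (a + b) = cj a + cj b"
    and cj_mult[simp]: "cj (a * b) = cj a * cj b"
    and cj_scaleR[simp]: "cj (scaleR r a) = scaleR r (cj a)"
    and cj_one[simp]: "cj 1 = 1"
    and inner_cj: "inner a b = inner 1 (cj a * b)"
    and re_cj: "a + cj a = scaleR (2 * inner 1 a) 1"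

instantiation real :: rcl begin
definition cj_real_def[simp]: "cj (x::real) = x"
instance by standard (auto simp: inner_real_def)
end

instantiation complex :: rcl begin
definition cj_complex_def[simp]: "cj (x::complex) = cnj x"
instance by standard (auto simp: inner_complex_def complex_eq_iff scaleR_conv_of_real)
end


lemma cj_of_real[simp]: "cj (of_real r :: 'a::rcl) = of_real r"
proof -
  have "of_real r = scaleR r (1::'a)" by (simp add: scaleR_conv_of_real)
  thus ?thesis by simp
qed

lemma cj_zero[simp]: "cj (0::'a::rcl) = 0"
  using cj_of_real[of 0, where 'a='a] by simp

lemma cj_minus[simp]: "cj (- a :: 'a::rcl) = - cj a"
  using cj_scaleR[of "-1" a] by simp

lemma cj_diff[simp]: "cj (a - b :: 'a::rcl) = cj a - cj b"
  using cj_add[of a "-b"] by simp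

lemma cj_sum: "cj (sum f A :: 'a::rcl) = sum (\<lambda>x. cj (f x)) A"
  by (induction A rule: infinite_finite_induct) auto

definition re :: "'a::rcl \<Rightarrow> real" where "re a = inner 1 a"

lemma re_of_real[simp]: "re (of_real r :: 'a::rcl) = r"
proof -
  have "of_real r = scaleR r (1::'a)" by (simp add: scaleR_conv_of_real)
  moreover have "inner (1::'a) 1 = 1" by (metis norm_one power2_norm_eq_inner power_one)
  ultimately show ?thesis by (simp add: re_def)
qed

lemma re_add[simp]: "re (a + b) = re a + re b"
  by (simp add: re_def inner_add_right)
lemma re_diff[simp]: "re (a - b) = re a - re b"
  by (simp add: re_def inner_diff_right)
lemma re_minus[simp]: "re (- a) = - re a"
  by (simp add: re_def)
lemma re_sum: "re (sum f A) = (\<Sum>x\<in>A. re (f x))"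
  by (simp add: re_def inner_sum_right)
lemma re_scaleR[simp]: "re (scaleR r a) = r * re a"
  by (simp add: re_def)
lemma re_of_real_mult[simp]: "re (of_real r * a) = r * re a"
  by (simp add: scaleR_conv_of_real[symmetric] del: re_scaleR) (simp add: re_def)

lemma cj_plus: "a + cj a = of_real (2 * re (a::'a::rcl))"
  by (simp add: re_cj re_def scaleR_conv_of_real)

lemma re_cj_eq[simp]: "re (cj a) = re (a::'a::rcl)"
proof -
  have "re (a + cj a) = 2 * re a" unfolding cj_plus by (rule re_of_real)
  thus ?thesis by simp
qed

lemma real_elem: "cj b = b \<Longrightarrow> b = of_real (re (b::'a::rcl))"
proof -
  assume h: "cj b = b"
  have e: "b + b = of_real (2 * re b)" using cj_plus[of b] h by simp
  have "b = of_real (1/2) * (b + b)"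
    by (simp add: distrib_left flip: of_real_mult of_real_add)
  also have "\<dots> = of_real (1/2) * of_real (2 * re b)" using e by simp
  also have "\<dots> = of_real (re b)" by (simp only: of_real_mult[symmetric]) simp
  finally show ?thesis .
qed

lemma inner_re: "inner a b = re (cj a * (b::'a::rcl))"
  unfolding re_def by (rule inner_cj)

lemma cj_mult_self: "cj a * a = of_real ((norm (a::'a::rcl))^2)"
proof -
  have "cj (cj a * a) = cj a * a" by (simp only: cj_mult cj_cj mult.commute)
  hence "cj a * a = of_real (re (cj a * a))" by (rule real_elem)
  also have "re (cj a * a) = inner a a" by (simp only: inner_re)
  also have "inner a a = (norm a)^2" by (simp only: power2_norm_eq_inner)
  finally show ?thesis .
qed



lemma quad_zero:
  fixes a b :: real
  assumes h: "\<And>t. a * t + b * t^2 \<le> 0"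
  shows "a = 0"
proof (rule ccontr)
  assume a: "a \<noteq> 0"
  define c where "c = \<bar>b\<bar> + 1"
  have c: "c > 0" "c + b \<ge> 1" unfolding c_def by auto
  have "a * (a / c) + b * (a / c)^2 = a^2 * (c + b) / c^2"
    using c by (simp add: field_simps power2_eq_square)
  also have "\<dots> > 0" using a c by (intro divide_pos_pos mult_pos_pos) auto
  finally show False using h[of "a / c"] by linarith
qed

lemma sym_eig:
  fixes T :: "'v::euclidean_space \<Rightarrow> 'v"
  assumes lin: "linear T" and sym: "\<And>x y. inner (T x) y = inner x (T y)"
    and S: "subspace S" and inv: "\<And>x. x \<in> S \<Longrightarrow> T x \<in> S"
    and v: "v \<in> S" "v \<noteq> 0"
  shows "\<exists>u\<in>S. norm u = 1 \<and> (\<exists>l. T u = l *\<^sub>R u)"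
proof -
  define K where "K = S \<inter> sphere 0 1"
  define f where "f x = inner x (T x)" for x
  have cK: "compact K" unfolding K_def
    by (rule closed_Int_compact[OF closed_subspace[OF S] compact_sphere])
  moreover have "v /\<^sub>R norm v \<in> K"
  proof -
    have "v /\<^sub>R norm v \<in> S" by (rule subspace_scale[OF S v(1)])
    moreover have "norm (v /\<^sub>R norm v) = 1" using v(2) by simp
    ultimately show ?thesis unfolding K_def by simp
  qed
  hence ne: "K \<noteq> {}" by blast
  have cf: "continuous_on K f"
  proof -
    have "bounded_linear T" using lin by (simp only: linear_conv_bounded_linear)
    hence "continuous_on K T" by (rule linear_continuous_on)
    thus ?thesis unfolding f_def by (intro continuous_on_inner continuous_on_id)
  qed
  obtain u where uK: "u \<in> K" and umax: "\<And>y. y \<in> K \<Longrightarrow> f y \<le> f u"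
    using continuous_attains_sup[OF cK ne cf] by blast
  define l where "l = f u"
  have uS: "u \<in> S" and nu: "norm u = 1" using uK by (auto simp: K_def)
  have T0: "T 0 = 0" using lin by (simp add: linear_0)
  have fscale: "f (c *\<^sub>R x) = c^2 * f x" for c x
    by (simp add: f_def linear_scale[OF lin] power2_eq_square)
  have bound: "f x \<le> l * (norm x)^2" if "x \<in> S" for x
  proof (cases "x = 0")
    case True thus ?thesis by (simp add: f_def T0)
  next
    case False
    have "x /\<^sub>R norm x \<in> K" using that False S by (auto simp: K_def subspace_scale)
    hence "f (x /\<^sub>R norm x) \<le> l" using umax l_def by auto
    hence "f x / (norm x)^2 \<le> l" using fscale[of "inverse (norm x)" x]
      by (simp add: power_inverse divide_inverse mult.commute)
    thus ?thesis using False by (simp add: divide_le_eq mult.commute)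
  qed
  have g0: "inner w (T u) - l * inner u w = 0" if wS: "w \<in> S" for w
  proof -
    have "2 * (inner w (T u) - l * inner u w) * t + (f w - l * (norm w)^2) * t^2 \<le> 0" for t
    proof -
      have xS: "u + t *\<^sub>R w \<in> S" using uS wS S by (simp add: subspace_add subspace_scale)
      have e1: "f (u + t *\<^sub>R w) = f u + 2 * t * inner w (T u) + t^2 * f w"
        unfolding f_def using sym[of u w]
        by (simp add: linear_add[OF lin] linear_scale[OF lin] inner_add_left inner_add_right
            power2_eq_square algebra_simps inner_commute)
      have uu: "inner u u = 1" using nu by (simp add: power2_norm_eq_inner[symmetric])
      have "(norm (u + t *\<^sub>R w))^2 = inner (u + t *\<^sub>R w) (u + t *\<^sub>R w)"
        by (simp only: power2_norm_eq_inner)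
      also have "\<dots> = inner u u + 2 * t * inner u w + t^2 * inner w w"
        by (simp add: inner_add_left inner_add_right inner_commute power2_eq_square algebra_simps)
      finally have e2: "(norm (u + t *\<^sub>R w))^2 = 1 + 2 * t * inner u w + t^2 * (norm w)^2"
        using uu by (simp add: power2_norm_eq_inner)
      show ?thesis using bound[OF xS] e1 e2 l_def by (simp add: algebra_simps)
    qed
    hence "2 * (inner w (T u) - l * inner u w) = 0"
      by (intro quad_zero[of _ "f w - l * (norm w)^2"]) (simp add: mult.assoc)
    thus ?thesis by simp
  qed
  define w where "w = T u - l *\<^sub>R u"
  have wS: "w \<in> S" unfolding w_def using uS S inv by (simp add: subspace_diff subspace_scale)
  have "inner w (T u) - l * inner u w = inner w w"
    by (simp add: w_def inner_diff_left inner_diff_right inner_commute algebra_simps)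
  hence "w = 0" using g0[OF wS] by simp
  thus ?thesis using uS nu unfolding w_def by auto
qed



definition gin :: "'a::rcl^'n \<Rightarrow> 'a^'n \<Rightarrow> 'a" where
  "gin x y = (\<Sum>i\<in>UNIV. cj (x$i) * y$i)"
definition adj :: "'a::rcl^'n^'n \<Rightarrow> 'a^'n^'n" where
  "adj A = (\<chi> i j. cj (A$j$i))"
definition herm :: "'a::rcl^'n^'n \<Rightarrow> bool" where
  "herm A \<longleftrightarrow> adj A = A"
definition gpsd :: "'a::rcl^'n^'n \<Rightarrow> bool" where
  "gpsd A \<longleftrightarrow> herm A \<and> (\<forall>x. 0 \<le> re (gin x (A *v x)) \<and> cj (gin x (A *v x)) = gin x (A *v x))"
definition tr :: "'a::rcl^'n^'n \<Rightarrow> 'a" where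
  "tr X = (\<Sum>i\<in>UNIV. X$i$i)"

lemma gin_add_right: "gin x (y + z) = gin x y + gin x z"
  by (simp add: gin_def distrib_left sum.distrib)
lemma gin_add_left: "gin (x + y) z = gin x z + gin y z"
  by (simp add: gin_def distrib_right sum.distrib)
lemma gin_diff_right: "gin x (y - z) = gin x y - gin x z"
  by (simp add: gin_def right_diff_distrib sum_subtractf)
lemma gin_scale_right: "gin x (c *s y) = c * gin x y"
  by (simp add: gin_def sum_distrib_left algebra_simps)
lemma gin_scale_left: "gin (c *s x) y = cj c * gin x y"
  by (simp add: gin_def sum_distrib_left algebra_simps)
lemma gin_scaleR_right: "gin x (r *\<^sub>R y) = of_real r * gin x y"
  unfolding gin_def by (simp only: vector_scaleR_component, simp only: scaleR_conv_of_real) (simp add: sum_distrib_left algebra_simps)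
lemma gin_scaleR_left: "gin (r *\<^sub>R x) y = of_real r * gin x y"
  unfolding gin_def by (simp only: vector_scaleR_component, simp only: scaleR_conv_of_real) (simp add: sum_distrib_left algebra_simps)
lemma gin_zero_right[simp]: "gin x 0 = 0" by (simp add: gin_def)
lemma gin_zero_left[simp]: "gin 0 x = 0" by (simp add: gin_def)
lemma gin_sum_right: "gin x (sum f S) = (\<Sum>s\<in>S. gin x (f s))"
  by (induction S rule: infinite_finite_induct) (auto simp: gin_add_right)
lemma gin_sum_left: "gin (sum f S) y = (\<Sum>s\<in>S. gin (f s) y)"
  by (induction S rule: infinite_finite_induct) (auto simp: gin_add_left)
lemma cj_gin: "cj (gin x y) = gin y x"
  by (simp add: gin_def cj_sum mult.commute)
lemma inner_gin: "inner x y = re (gin x y)"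
  by (simp add: inner_vec_def gin_def re_sum inner_re)
lemma gin_self: "gin x x = of_real ((norm x)^2)"
proof -
  have "cj (gin x x) = gin x x" by (simp add: cj_gin)
  hence "gin x x = of_real (re (gin x x))" by (rule real_elem)
  thus ?thesis by (simp add: inner_gin[symmetric] power2_norm_eq_inner)
qed

lemma mv_add: "A *v (x + y) = A *v x + A *v (y::'a::rcl^'n)"
  by (simp add: matrix_vector_mult_def vec_eq_iff distrib_left sum.distrib)
lemma mv_scaleR: "A *v (r *\<^sub>R x) = r *\<^sub>R (A *v (x::'a::rcl^'n))"
  by (simp add: matrix_vector_mult_def vec_eq_iff scaleR_sum_right)
lemma mv_scale: "A *v (c *s x) = c *s (A *v (x::'a::rcl^'n))"
  by (simp add: matrix_vector_mult_def vec_eq_iff sum_distrib_left algebra_simps)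
lemma mv_sum: "A *v (sum f S) = (\<Sum>s\<in>S. A *v (f s :: 'a::rcl^'n))"
  by (induction S rule: infinite_finite_induct) (auto simp: mv_add)
lemma mv_linear: "linear (\<lambda>x. A *v (x::'a::rcl^'n))"
  by (rule linearI) (simp_all add: mv_add mv_scaleR)

lemma herm_gin: assumes "herm A" shows "gin x (A *v y) = gin (A *v x) y"
proof -
  have a: "cj (A$j$i) = A$i$j" for i j
    using assms unfolding herm_def adj_def by (metis vec_lambda_beta)
  have "gin x (A *v y) = (\<Sum>i\<in>UNIV. \<Sum>j\<in>UNIV. cj (x$i) * A$i$j * y$j)"
    by (simp add: gin_def matrix_vector_mult_def sum_distrib_left mult.assoc)
  also have "\<dots> = (\<Sum>j\<in>UNIV. \<Sum>i\<in>UNIV. cj (x$i) * A$i$j * y$j)" by (rule sum.swap)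
  also have "\<dots> = gin (A *v x) y"
    by (simp add: gin_def matrix_vector_mult_def cj_sum sum_distrib_right sum_distrib_left a algebra_simps)
  finally show ?thesis .
qed

lemma herm_inner: "herm A \<Longrightarrow> inner (A *v x) y = inner x (A *v y)"
  by (simp add: inner_gin herm_gin)



lemma joint_eig:
  fixes A :: "nat \<Rightarrow> 'a::rcl^'n^'n"
  assumes herm: "\<forall>i<d. herm (A i)" and comm: "\<forall>i<d. \<forall>j<d. A i ** A j = A j ** A i"
    and S: "subspace S" and inv: "\<And>i x. i < d \<Longrightarrow> x \<in> S \<Longrightarrow> A i *v x \<in> S"
    and v: "v \<in> S" "v \<noteq> 0"
  shows "\<exists>u\<in>S. norm u = 1 \<and> (\<forall>i<d. A i *v u = (inner u (A i *v u)) *\<^sub>R u)"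
proof -
  have step: "\<exists>\<mu> w. w \<in> S \<and> w \<noteq> 0 \<and> (\<forall>i<k. A i *v w = \<mu> i *\<^sub>R w)" if "k \<le> d" for k
    using that
  proof (induction k)
    case 0 thus ?case using v by blast
  next
    case (Suc k)
    then obtain \<mu> w where w: "w \<in> S" "w \<noteq> 0" "\<forall>i<k. A i *v w = \<mu> i *\<^sub>R w" by auto
    have kd: "k < d" using Suc.prems by simp
    define S' where "S' = {x\<in>S. \<forall>i<k. A i *v x = \<mu> i *\<^sub>R x}"
    have S': "subspace S'" unfolding S'_def
    proof (rule subspaceI)
      show "0 \<in> {x \<in> S. \<forall>i<k. A i *v x = \<mu> i *\<^sub>R x}"
        using S by (simp add: subspace_0 matrix_vector_mult_0_right)
    next
      fix x y assume "x \<in> {x \<in> S. \<forall>i<k. A i *v x = \<mu> i *\<^sub>R x}" "y \<in> {x \<in> S. \<forall>i<k. A i *v x = \<mu> i *\<^sub>R x}"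
      thus "x + y \<in> {x \<in> S. \<forall>i<k. A i *v x = \<mu> i *\<^sub>R x}"
        using S by (simp add: subspace_add mv_add scaleR_add_right)
    next
      fix c x assume "x \<in> {x \<in> S. \<forall>i<k. A i *v x = \<mu> i *\<^sub>R x}"
      thus "c *\<^sub>R x \<in> {x \<in> S. \<forall>i<k. A i *v x = \<mu> i *\<^sub>R x}"
        using S by (simp add: subspace_scale mv_scaleR)
    qed
    have inv': "A k *v x \<in> S'" if xS: "x \<in> S'" for x
    proof -
      have "A i *v (A k *v x) = \<mu> i *\<^sub>R (A k *v x)" if ik: "i < k" for i
      proof -
        have "A i *v (A k *v x) = (A i ** A k) *v x" by (simp add: matrix_vector_mul_assoc)
        also have "\<dots> = (A k ** A i) *v x" using comm ik kd by simp
        also have "\<dots> = A k *v (A i *v x)" by (simp add: matrix_vector_mul_assoc)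
        also have "\<dots> = \<mu> i *\<^sub>R (A k *v x)" using xS ik by (simp add: S'_def mv_scaleR)
        finally show ?thesis .
      qed
      thus ?thesis using xS inv[OF kd] by (simp add: S'_def)
    qed
    have wS': "w \<in> S'" using w by (simp add: S'_def)
    obtain u l where u: "u \<in> S'" "norm u = 1" "A k *v u = l *\<^sub>R u"
      using sym_eig[OF mv_linear herm_inner S' inv' wS' w(2)] herm kd by blast
    show ?case
    proof (intro exI conjI)
      show "u \<in> S" using u by (simp add: S'_def)
      show "u \<noteq> 0" using u by auto
      show "\<forall>i<Suc k. A i *v u = (\<mu>(k := l)) i *\<^sub>R u"
        using u by (auto simp: S'_def less_Suc_eq)
    qed
  qed
  obtain \<mu> w where w: "w \<in> S" "w \<noteq> 0" "\<forall>i<d. A i *v w = \<mu> i *\<^sub>R w"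
    using step[of d] by auto
  define u where "u = (1 / norm w) *\<^sub>R w"
  have uS: "u \<in> S" unfolding u_def using S w by (simp add: subspace_scale)
  have nu: "norm u = 1" unfolding u_def using w by simp
  have eu: "A i *v u = \<mu> i *\<^sub>R u" if "i < d" for i
    unfolding u_def using w that by (simp add: mv_scaleR)
  have "inner u (A i *v u) = \<mu> i" if "i < d" for i
    using eu[OF that] nu by (simp add: power2_norm_eq_inner[symmetric])
  thus ?thesis using uS nu eu by auto
qed



definition jbasis :: "nat \<Rightarrow> (nat \<Rightarrow> 'a::rcl^'n^'n) \<Rightarrow> ('a^'n) set \<Rightarrow> bool" where
  "jbasis d A B \<longleftrightarrow> (\<forall>u\<in>B. \<forall>v\<in>B. gin u v = (if u = v then 1 else 0))
     \<and> (\<forall>u\<in>B. \<forall>i<d. A i *v u = (inner u (A i *v u)) *\<^sub>R u)"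

lemma re_zero[simp]: "re (0::'a::rcl) = 0"
  using re_of_real[of 0, where 'a='a] by simp

lemma jbasis_bound:
  assumes "jbasis d A (B :: ('a::rcl^'n) set)"
  shows "finite B \<and> card B \<le> DIM('a^'n)"
proof -
  have o: "gin u v = (if u = v then 1 else 0)" if "u \<in> B" "v \<in> B" for u v
    using assms that by (simp add: jbasis_def)
  have "pairwise orthogonal B"
    unfolding pairwise_def orthogonal_def using o by (simp add: inner_gin)
  moreover have "0 \<notin> B" using o[of 0 0] by auto
  ultimately have "independent B" by (rule pairwise_orthogonal_independent)
  thus ?thesis by (rule independent_bound)
qed

lemma joint_basis:
  fixes A :: "nat \<Rightarrow> 'a::rcl^'n^'n"
  assumes herm: "\<forall>i<d. herm (A i)" and comm: "\<forall>i<d. \<forall>j<d. A i ** A j = A j ** A i"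
  shows "\<exists>B. finite B \<and> jbasis d A B \<and> (\<forall>x. x = (\<Sum>u\<in>B. gin u x *s u))"
proof -
  define C where "C = card ` {B. jbasis d A B}"
  have "jbasis d A {}" by (simp add: jbasis_def)
  hence Cne: "C \<noteq> {}" unfolding C_def by blast
  have Cfin: "finite C"
  proof (rule finite_subset)
    show "C \<subseteq> {..DIM('a^'n)}" unfolding C_def using jbasis_bound by fastforce
  qed simp
  obtain B where B: "jbasis d A B" "card B = Max C"
    using Max_in[OF Cfin Cne] unfolding C_def by auto
  have maxB: "card B' \<le> card B" if "jbasis d A B'" for B'
    using Max_ge[OF Cfin, of "card B'"] that B(2) unfolding C_def by auto
  have fB: "finite B" using jbasis_bound[OF B(1)] by simp
  have o: "gin u v = (if u = v then 1 else 0)" if "u \<in> B" "v \<in> B" for u v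
    using B(1) that by (simp add: jbasis_def)
  have e: "A i *v u = (inner u (A i *v u)) *\<^sub>R u" if "u \<in> B" "i < d" for u i
    using B(1) that by (simp add: jbasis_def)
  have complete: "x = (\<Sum>u\<in>B. gin u x *s u)" for x
  proof (rule ccontr)
    assume ne: "x \<noteq> (\<Sum>u\<in>B. gin u x *s u)"
    define r where "r = x - (\<Sum>u\<in>B. gin u x *s u)"
    have rnz: "r \<noteq> 0" using ne by (simp add: r_def)
    define S where "S = {y. \<forall>u\<in>B. gin u y = 0}"
    have gr: "gin u r = 0" if "u \<in> B" for u
    proof -
      have "gin u (\<Sum>v\<in>B. gin v x *s v) = (\<Sum>v\<in>B. gin v x * gin u v)"
        by (simp add: gin_sum_right gin_scale_right)
      also have "\<dots> = (\<Sum>v\<in>B. if v = u then gin u x else 0)"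
        by (rule sum.cong) (auto simp: o that)
      also have "\<dots> = gin u x" using fB that by simp
      finally show ?thesis by (simp add: r_def gin_diff_right)
    qed
    have rS: "r \<in> S" using gr by (simp add: S_def)
    have SS: "subspace S" unfolding S_def
      by (rule subspaceI) (simp_all add: gin_add_right gin_scaleR_right)
    have invS: "A i *v y \<in> S" if "i < d" "y \<in> S" for i y
    proof -
      have "gin u (A i *v y) = 0" if "u \<in> B" for u
      proof -
        have "gin u (A i *v y) = gin (A i *v u) y" using herm \<open>i < d\<close> by (simp add: herm_gin)
        also have "\<dots> = 0" using \<open>y \<in> S\<close> that
          by (subst e[OF that \<open>i < d\<close>]) (simp add: gin_scaleR_left S_def)
        finally show ?thesis .
      qed
      thus ?thesis by (simp add: S_def)
    qed
    obtain u where u: "u \<in> S" "norm u = 1" "\<forall>i<d. A i *v u = (inner u (A i *v u)) *\<^sub>R u"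
      using joint_eig[OF herm comm SS invS rS rnz] by blast
    have guu: "gin u u = 1" using u(2) by (simp add: gin_self)
    have uB: "u \<notin> B" using u(1) guu by (auto simp: S_def)
    have "jbasis d A (insert u B)"
      unfolding jbasis_def
    proof (intro conjI ballI)
      fix v w assume "v \<in> insert u B" "w \<in> insert u B"
      moreover have "gin v u = 0" if "v \<in> B" for v
        using u(1) that by (auto simp: S_def)
      moreover have "gin u v = 0" if "v \<in> B" for v
        using u(1) that cj_gin[of v u] by (auto simp: S_def)
      ultimately show "gin v w = (if v = w then 1 else 0)"
        using o guu uB u(1) by (auto simp: S_def)
    next
      fix v i assume "v \<in> insert u B"
      thus "\<forall>i<d. A i *v v = (inner v (A i *v v)) *\<^sub>R v" using u(3) e by auto
    qed
    hence "card (insert u B) \<le> card B" by (rule maxB)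
    thus False using fB uB by simp
  qed
  show ?thesis using fB B(1) complete by blast
qed



lemma scaleR_as_scale: "r *\<^sub>R (v::'a::rcl^'n) = of_real r *s v"
  by (simp only: vec_eq_iff vector_scaleR_component vector_smult_component) (simp add: scaleR_conv_of_real)

lemma orth_expand:
  assumes fB: "finite B" and o: "\<And>u v. u \<in> B \<Longrightarrow> v \<in> B \<Longrightarrow> gin u v = (if u = v then 1 else (0::'a::rcl))"
  shows "gin (\<Sum>u\<in>B. a u *s u) (\<Sum>v\<in>B. b v *s (v::'a^'n)) = (\<Sum>u\<in>B. cj (a u) * b u)"
proof -
  have g: "gin (\<Sum>u\<in>B. a u *s u) v = cj (a v)" if vB: "v \<in> B" for v
  proof -
    have "gin (\<Sum>u\<in>B. a u *s u) v = (\<Sum>u\<in>B. cj (a u) * gin u v)"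
      by (simp add: gin_sum_left gin_scale_left)
    also have "\<dots> = (\<Sum>u\<in>B. if u = v then cj (a v) else 0)"
      by (intro sum.cong refl) (auto simp: o vB)
    also have "\<dots> = cj (a v)" using fB vB by simp
    finally show ?thesis .
  qed
  have "gin (\<Sum>u\<in>B. a u *s u) (\<Sum>v\<in>B. b v *s v) = (\<Sum>v\<in>B. b v * gin (\<Sum>u\<in>B. a u *s u) v)"
    by (simp add: gin_sum_right gin_scale_right)
  also have "\<dots> = (\<Sum>v\<in>B. cj (a v) * b v)"
    by (intro sum.cong refl) (simp add: g mult.commute)
  finally show ?thesis .
qed

lemma trace_basis:
  assumes fB: "finite B" and complete: "\<And>x. x = (\<Sum>u\<in>B. gin u x *s u)"
  shows "tr M = (\<Sum>u\<in>B. gin u (M *v (u::'a::rcl^'n)))"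
proof -
  have ax: "gin u (axis j 1) = cj (u$j)" for u :: "'a^'n" and j :: 'n
  proof -
    have "(\<lambda>i. cj (u$i) * (axis j 1 :: 'a^'n)$i) = (\<lambda>i. if i = j then cj (u$j) else 0)"
      by (auto simp: axis_def)
    thus ?thesis unfolding gin_def by (simp only:) simp
  qed
  have Mj: "M$j$j = (M *v axis j 1)$j" for j :: 'n
  proof -
    have "(\<lambda>k. M$j$k * (axis j 1 :: 'a^'n)$k) = (\<lambda>k. if k = j then M$j$j else 0)"
      by (auto simp: axis_def)
    thus ?thesis unfolding matrix_vector_mult_def by (simp only: vec_lambda_beta) simp
  qed
  have "(M *v axis j 1)$j = (\<Sum>u\<in>B. cj (u$j) * (M *v u)$j)" for j
  proof -
    have "M *v axis j 1 = M *v (\<Sum>u\<in>B. gin u (axis j 1) *s u)" using complete by metis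
    also have "\<dots> = (\<Sum>u\<in>B. cj (u$j) *s (M *v u))" by (simp add: mv_sum mv_scale ax)
    finally show ?thesis by (simp add: sum_component)
  qed
  hence "tr M = (\<Sum>j\<in>UNIV. \<Sum>u\<in>B. cj (u$j) * (M *v u)$j)" by (simp add: tr_def Mj)
  also have "\<dots> = (\<Sum>u\<in>B. \<Sum>j\<in>UNIV. cj (u$j) * (M *v u)$j)" by (rule sum.swap)
  also have "\<dots> = (\<Sum>u\<in>B. gin u (M *v u))" by (simp add: gin_def)
  finally show ?thesis .
qed



lemma rank_one:
  fixes x :: "'a::rcl^'n"
  assumes nx: "norm x = 1"
  defines "X \<equiv> (\<chi> i j. x$i * cj (x$j))"
  shows "herm X" "gpsd X" "tr X = 1" "\<And>A. herm A \<Longrightarrow> tr (adj A ** X) = gin x (A *v x)"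
proof -
  show hX: "herm X" unfolding herm_def adj_def X_def by (simp add: vec_eq_iff mult.commute)
  have Xv: "X *v y = gin x y *s x" for y
    by (simp add: X_def vec_eq_iff matrix_vector_mult_def gin_def sum_distrib_left algebra_simps)
  have q: "gin y (X *v y) = of_real ((norm (gin x y))^2)" for y
  proof -
    have "gin y (X *v y) = gin x y * gin y x" by (simp add: Xv gin_scale_right)
    also have "\<dots> = cj (gin x y) * gin x y" by (simp add: cj_gin mult.commute)
    finally show ?thesis by (simp add: cj_mult_self)
  qed
  show "gpsd X" unfolding gpsd_def using hX by (simp add: q del: of_real_power)
  have "tr X = gin x x" by (simp add: tr_def X_def gin_def mult.commute)
  thus "tr X = 1" using nx by (simp add: gin_self)
  fix A :: "'a^'n^'n" assume hA: "herm A"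
  have "tr (adj A ** X) = tr (A ** X)" using hA by (simp add: herm_def)
  also have "\<dots> = (\<Sum>i\<in>UNIV. \<Sum>k\<in>UNIV. A$i$k * (x$k * cj (x$i)))"
    by (simp add: tr_def matrix_matrix_mult_def X_def)
  also have "\<dots> = gin x (A *v x)"
    by (simp add: gin_def matrix_vector_mult_def sum_distrib_left algebra_simps)
  finally show "tr (adj A ** X) = gin x (A *v x)" .
qed

lemma sdp_to_vec:
  fixes A :: "nat \<Rightarrow> 'a::rcl^'n^'n"
  assumes herm: "\<forall>i<d. herm (A i)" and comm: "\<forall>i<d. \<forall>j<d. A i ** A j = A j ** A i"
    and X: "gpsd X" "tr X = 1"
  shows "\<exists>x. norm x = 1 \<and> (\<forall>i<d. re (gin x (A i *v x)) = re (tr (adj (A i) ** X)))"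
proof -
  obtain B where fB: "finite B" and jB: "jbasis d A B" and complete: "\<And>x. x = (\<Sum>u\<in>B. gin u x *s u)"
    using joint_basis[OF herm comm] by blast
  have o: "\<And>u v. u \<in> B \<Longrightarrow> v \<in> B \<Longrightarrow> gin u v = (if u = v then 1 else 0)"
    using jB by (simp add: jbasis_def)
  define lam where "lam i u = inner u (A i *v u)" for i u
  have e: "A i *v u = lam i u *\<^sub>R u" if "u \<in> B" "i < d" for u i
    using jB that by (simp add: jbasis_def lam_def)
  define p where "p u = re (gin u (X *v u))" for u
  have p0: "p u \<ge> 0" for u using X(1) by (simp add: gpsd_def p_def)
  have pe: "gin u (X *v u) = of_real (p u)" for u
    using X(1) real_elem[of "gin u (X *v u)"] by (simp add: gpsd_def p_def)
  have trB: "tr M = (\<Sum>u\<in>B. gin u (M *v u))" for M by (rule trace_basis[OF fB complete])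
  have psum: "(\<Sum>u\<in>B. p u) = 1"
  proof -
    have "(1::'a) = (\<Sum>u\<in>B. of_real (p u))" using X(2) trB[of X] pe by simp
    hence "(1::'a) = of_real (\<Sum>u\<in>B. p u)" by (simp add: of_real_sum)
    thus ?thesis by (metis of_real_eq_1_iff)
  qed
  have trA: "tr (adj (A i) ** X) = of_real (\<Sum>u\<in>B. lam i u * p u)" if i: "i < d" for i
  proof -
    have "tr (adj (A i) ** X) = tr (A i ** X)" using herm i by (simp add: herm_def)
    also have "\<dots> = (\<Sum>u\<in>B. gin u (A i *v (X *v u)))"
      by (simp add: trB matrix_vector_mul_assoc)
    also have "\<dots> = (\<Sum>u\<in>B. gin (A i *v u) (X *v u))"
      using herm i by (simp add: herm_gin)
    also have "\<dots> = (\<Sum>u\<in>B. of_real (lam i u * p u))"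
      by (intro sum.cong refl) (simp add: e i gin_scaleR_left pe)
    finally show ?thesis by simp
  qed
  define x where "x = (\<Sum>u\<in>B. of_real (sqrt (p u)) *s u)"
  have Ax: "A i *v x = (\<Sum>u\<in>B. (of_real (sqrt (p u)) * of_real (lam i u)) *s u)" if i: "i < d" for i
    unfolding x_def mv_sum mv_scale
    by (intro sum.cong refl) (simp add: e i scaleR_as_scale)
  have sq: "of_real (sqrt (p u)) * of_real (sqrt (p u)) = (of_real (p u) :: 'a)" for u
    using p0[of u] by (simp flip: of_real_mult)
  have "gin x x = (\<Sum>u\<in>B. of_real (p u))" unfolding x_def
    by (simp add: orth_expand[OF fB o] sq)
  hence "gin x x = 1" using psum by (simp flip: of_real_sum)
  hence "(norm x)^2 = 1" by (simp add: gin_self del: of_real_power)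
  hence nx: "norm x = 1" using norm_ge_zero[of x] by (simp add: power2_eq_1_iff)
  have "re (gin x (A i *v x)) = re (tr (adj (A i) ** X))" if i: "i < d" for i
  proof -
    have "gin x (A i *v x) = (\<Sum>u\<in>B. of_real (p u) * of_real (lam i u))"
      unfolding Ax[OF i] unfolding x_def
      by (simp add: orth_expand[OF fB o] sq mult.assoc[symmetric])
    thus ?thesis by (simp add: trA[OF i] re_sum mult.commute flip: of_real_mult)
  qed
  thus ?thesis using nx by blast
qed



lemma re_real[simp]: "re (a::real) = a" by (simp add: re_def)
lemma re_complex[simp]: "re (a::complex) = Re a" by (simp add: re_def inner_complex_def)

lemma rinner_gin: "rinner x y = gin x y" by (simp add: rinner_def gin_def)
lemma transpose_adj: "transpose (A::real^'n^'n) = adj A" by (simp add: transpose_def adj_def)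
lemma rsym_herm: "rsym A \<longleftrightarrow> herm A" by (simp add: rsym_def herm_def transpose_adj)
lemma rpsd_gpsd: "rpsd A \<longleftrightarrow> gpsd A" by (simp add: rpsd_def gpsd_def rsym_herm rinner_gin)
lemma rtrace_tr: "rtrace X = tr X" by (simp add: rtrace_def tr_def)
lemma rmat_tr: "rmat_inner A X = tr (adj A ** X)" by (simp add: rmat_inner_def rtrace_tr transpose_adj)

lemma cinner_gin: "cinner_vec x y = gin x y" by (simp add: cinner_vec_def gin_def)
lemma cadj_adj: "cadj A = adj A" by (simp add: cadj_def adj_def)
lemma cherm_herm: "cherm A \<longleftrightarrow> herm A" by (simp add: cherm_def herm_def cadj_adj)
lemma cnj_id_iff: "cnj z = z \<longleftrightarrow> Im z = 0" by (simp add: complex_eq_iff)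
lemma cpsd_gpsd: "cpsd A \<longleftrightarrow> gpsd A"
  by (auto simp: cpsd_def gpsd_def cherm_herm cinner_gin cnj_id_iff)
lemma ctrace_tr: "ctrace X = tr X" by (simp add: ctrace_def tr_def)
lemma cmat_tr: "cmat_inner A X = tr (adj A ** X)" by (simp add: cmat_inner_def ctrace_tr cadj_adj)

lemma gen_sets:
  fixes A :: "nat \<Rightarrow> 'a::rcl^'n^'n"
  assumes psd: "\<forall>i<d. gpsd (A i)" and comm: "\<forall>i<d. \<forall>j<d. A i ** A j = A j ** A i"
  shows "{root d (\<Prod>i<d. re (gin x (A i *v x))) | x. norm x = 1}
       = {root d (\<Prod>i<d. re (tr (adj (A i) ** X))) | X. herm X \<and> gpsd X \<and> tr X = 1}"
proof -
  have herm: "\<forall>i<d. herm (A i)" using psd by (simp add: gpsd_def)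
  show ?thesis
  proof (intro equalityI subsetI)
    fix v assume "v \<in> {root d (\<Prod>i<d. re (gin x (A i *v x))) | x. norm x = 1}"
    then obtain x where x: "norm x = 1" and v: "v = root d (\<Prod>i<d. re (gin x (A i *v x)))" by blast
    define X where "X = (\<chi> i j. x$i * cj (x$j))"
    note r = rank_one[OF x, folded X_def]
    have "v = root d (\<Prod>i<d. re (tr (adj (A i) ** X)))"
      unfolding v using herm r(4) by (intro arg_cong[where f="root d"] prod.cong) auto
    thus "v \<in> {root d (\<Prod>i<d. re (tr (adj (A i) ** X))) | X. herm X \<and> gpsd X \<and> tr X = 1}"
      using r(1-3) by blast
  next
    fix v assume "v \<in> {root d (\<Prod>i<d. re (tr (adj (A i) ** X))) | X. herm X \<and> gpsd X \<and> tr X = 1}"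
    then obtain X where X: "herm X" "gpsd X" "tr X = 1"
      and v: "v = root d (\<Prod>i<d. re (tr (adj (A i) ** X)))" by blast
    obtain x where x: "norm x = 1" "\<forall>i<d. re (gin x (A i *v x)) = re (tr (adj (A i) ** X))"
      using sdp_to_vec[OF herm comm X(2,3)] by blast
    have "v = root d (\<Prod>i<d. re (gin x (A i *v x)))"
      unfolding v using x(2) by (intro arg_cong[where f="root d"] prod.cong) auto
    thus "v \<in> {root d (\<Prod>i<d. re (gin x (A i *v x))) | x. norm x = 1}" using x(1) by blast
  qed
qed

theorem mainTheorem7:
  fixes d :: nat
  shows "(\<forall>A :: nat \<Rightarrow> real^'n^'n.
            (\<forall>i<d. rpsd (A i)) \<and> (\<forall>i<d. \<forall>j<d. A i ** A j = A j ** A i)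
            \<longrightarrow> Opt_r d A = OptSDP_r d A)
       \<and> (\<forall>A :: nat \<Rightarrow> complex^'n^'n.
            (\<forall>i<d. cpsd (A i)) \<and> (\<forall>i<d. \<forall>j<d. A i ** A j = A j ** A i)
            \<longrightarrow> Opt_c d A = OptSDP_c d A)"
proof (intro conjI allI impI)
  fix A :: "nat \<Rightarrow> real^'n^'n"
  assume h: "(\<forall>i<d. rpsd (A i)) \<and> (\<forall>i<d. \<forall>j<d. A i ** A j = A j ** A i)"
  have "\<forall>i<d. gpsd (A i)" using h by (simp add: rpsd_gpsd)
  from gen_sets[OF this] h
  show "Opt_r d A = OptSDP_r d A"
    unfolding Opt_r_def OptSDP_r_def by (simp add: rinner_gin rmat_tr rsym_herm rpsd_gpsd rtrace_tr)
next
  fix A :: "nat \<Rightarrow> complex^'n^'n"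
  assume h: "(\<forall>i<d. cpsd (A i)) \<and> (\<forall>i<d. \<forall>j<d. A i ** A j = A j ** A i)"
  have "\<forall>i<d. gpsd (A i)" using h by (simp add: cpsd_gpsd)
  from gen_sets[OF this] h
  show "Opt_c d A = OptSDP_c d A"
    unfolding Opt_c_def OptSDP_c_def by (simp add: cinner_gin cmat_tr cherm_herm cpsd_gpsd ctrace_tr)
qed

end
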